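(* Let $G=\langle V,E\rangle$ be a directed graph in which every vertex has a self-loop, let $P=\{\pi_1,\ldots,\pi_n\}$ be a plan for $n$ agents in $G$, and let $D\in\mathbb{N}$. If the ACID instance $(G,P,D)$ is solvable, then the ACID instance $(G,P,D')$ with $D'=(n-1)\cdot\|P\|$ is also solvable.
   Context: A path in $G$ is a sequence of vertices $\pi=v_1v_2\ldots v_m$ with $(v_k,v_{k+1})\in E$ for all $1\le k<m$; its length is its number of steps $m-1$. Agent $i$ has a source $s_i$ and goal $g_i$; a plan $P=\{\pi_1,\ldots,\pi_n\}$ is a set of paths where $\pi_i$ goes from $s_i$ to $g_i$. The sum-of-costs $\|P\|$ is the sum of the lengths of the paths in $P$. Two paths $v_1\ldots v_k$ and $u_1\ldots u_k$ are non-colliding if for all $1\le j<k$: $v_j\neq u_j$ and $(v_j,v_{j+1})\neq(u_{j+1},u_j)$; if the paths have different lengths, the shorter one is extended by having its agent stay at its last vertex. A plan is non-colliding if every two of its paths are non-colliding. For $d\in\mathbb{N}$, a path $\pi'$ is a $d$-delay of $\pi=v_1\ldots v_m$ if $\pi'=v_1v_1^{k_1}v_2v_2^{k_2}\ldots v_mv_m^{k_m}$ with integers $k_i\ge0$, $\sum_i k_i=d$, where $v^{k}$ denotes $k$ additional repetitions of $v$. ACID (Avoiding Collisions by Introducing Delays): given $G$, a plan $P=\{\pi_1,\ldots,\pi_n\}$ and a budget $D\in\mathbb{N}$, the instance is solvable if there exist paths $\pi'_1,\ldots,\pi'_n$ with $\pi'_i$ a $d_i$-delay of $\pi_i$, $\sum_i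 d_i\le D$, and $\{\pi'_1,\ldots,\pi'_n\}$ non-colliding. *)

theory Defs
  imports Main
begin

definition is_path :: "'v set \<Rightarrow> ('v \<times> 'v) set \<Rightarrow> 'v list \<Rightarrow> bool" where
  "is_path V E p \<longleftrightarrow> p \<noteq> [] \<and> set p \<subseteq> V \<and>
     (\<forall>j. Suc j < length p \<longrightarrow> (p ! j, p ! Suc j) \<in> E)"

definition path_len :: "'v list \<Rightarrow> nat" where
  "path_len p = length p - 1"

definition soc :: "nat \<Rightarrow> (nat \<Rightarrow> 'v list) \<Rightarrow> nat" where
  "soc n P = (\<Sum>i<n. path_len (P i))"

definition is_delay :: "nat \<Rightarrow> 'v list \<Rightarrow> 'v list \<Rightarrow> bool" where
  "is_delay d p q \<longleftrightarrow> (\<exists>k :: nat \<Rightarrow> nat.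
      (\<Sum>j<length p. k j) = d \<and>
      q = concat (map (\<lambda>j. replicate (Suc (k j)) (p ! j)) [0..<length p]))"

definition pos :: "'v list \<Rightarrow> nat \<Rightarrow> 'v" where
  "pos p t = p ! min t (length p - 1)"

text \<open>Non-colliding paths (after extending the shorter one to the common length k):
  for all 1 \<le> j < k (here 0-based: j+1 < k), no vertex conflict and no swap conflict.\<close>
definition non_colliding :: "'v list \<Rightarrow> 'v list \<Rightarrow> bool" where
  "non_colliding p q \<longleftrightarrow> (\<forall>j. Suc j < max (length p) (length q) \<longrightarrow>
      pos p j \<noteq> pos q j \<and> (pos p j, pos p (Suc j)) \<noteq> (pos q (Suc j), pos q j))"

definition plan_non_colliding :: "nat \<Rightarrow> (nat \<Rightarrow> 'v list) \<Rightarrow> bool" where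
  "plan_non_colliding n P \<longleftrightarrow>
     (\<forall>i<n. \<forall>i'<n. i \<noteq> i' \<longrightarrow> non_colliding (P i) (P i'))"

text \<open>ACID instance (G, P, D) solvable (solvability does not depend on G).\<close>
definition acid_solvable :: "nat \<Rightarrow> (nat \<Rightarrow> 'v list) \<Rightarrow> nat \<Rightarrow> bool" where
  "acid_solvable n P D \<longleftrightarrow> (\<exists>P' :: nat \<Rightarrow> 'v list. \<exists>d :: nat \<Rightarrow> nat.
      (\<forall>i<n. is_delay (d i) (P i) (P' i)) \<and> (\<Sum>i<n. d i) \<le> D \<and>
      plan_non_colliding n P')"

end

theory Submission
  imports Defs
begin

definition delayh :: "nat \<Rightarrow> 'v list \<Rightarrow> 'v list \<Rightarrow> (nat \<Rightarrow> nat) \<Rightarrow> bool" where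
"delayh d p q h \<longleftrightarrow> length q = length p + d \<and> (\<forall>s<length q. q!s = p!(h s)) \<and> h 0 = 0 \<and>
  (\<forall>s. Suc s < length q \<longrightarrow> h (Suc s) = h s \<or> h (Suc s) = Suc (h s)) \<and> h (length q - 1) = length p - 1"

abbreviation blocks :: "(nat \<Rightarrow> nat) \<Rightarrow> 'v list \<Rightarrow> nat \<Rightarrow> 'v list" where
"blocks k p m \<equiv> concat (map (\<lambda>j. replicate (Suc (k j)) (p ! j)) [0..<m])"

lemma blocks_len: "length (blocks k p m) = m + (\<Sum>j<m. k j)"
  by (induction m) auto

lemma fwd_gen:
  assumes "0 < m"
  shows "\<exists>h. (\<forall>s<length (blocks k p m). blocks k p m ! s = p!(h s)) \<and> h 0 = 0 \<and>
   (\<forall>s. Suc s < length (blocks k p m) \<longrightarrow> h (Suc s) = h s \<or> h (Suc s) = Suc (h s)) \<and>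
   h (length (blocks k p m) - 1) = m - 1"
  using assms
proof (induction m)
  case 0 then show ?case by simp
next
  case (Suc m)
  show ?case
  proof (cases "m = 0")
    case True
    then show ?thesis by (intro exI[of _ "\<lambda>_. 0"]) (auto simp: nth_Cons split: nat.split)
  next
    case False
    then obtain h where h: "\<forall>s<length (blocks k p m). blocks k p m ! s = p!(h s)" "h 0 = 0"
      "\<forall>s. Suc s < length (blocks k p m) \<longrightarrow> h (Suc s) = h s \<or> h (Suc s) = Suc (h s)"
      "h (length (blocks k p m) - 1) = m - 1" using Suc by auto
    define Lq where "Lq = length (blocks k p m)"
    have Lq: "Lq = m + (\<Sum>j<m. k j)" using blocks_len Lq_def by blast
    have e: "blocks k p (Suc m) = blocks k p m @ replicate (Suc (k m)) (p ! m)" by simp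
    define h' where "h' s = (if s < Lq then h s else m)" for s
    show ?thesis
    proof (intro exI[of _ h'] conjI allI impI)
      fix s assume "s < length (blocks k p (Suc m))"
      then show "blocks k p (Suc m) ! s = p ! h' s" unfolding e using h(1)
        by (auto simp: nth_append h'_def Lq_def simp del: replicate_Suc)
    next
      show "h' 0 = 0" using h(2) False Lq by (auto simp: h'_def)
    next
      fix s assume "Suc s < length (blocks k p (Suc m))"
      show "h' (Suc s) = h' s \<or> h' (Suc s) = Suc (h' s)"
      proof -
        have "Suc s < Lq \<or> Suc s = Lq \<or> Suc s > Lq" by arith
        then show ?thesis
        proof (elim disjE)
          assume "Suc s < Lq" then show ?thesis using h(3) unfolding h'_def Lq_def by auto
        next
          assume a: "Suc s = Lq"
          then have "h s = m - 1" using h(4) unfolding Lq_def by (metis diff_Suc_1)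
          then show ?thesis using a False unfolding h'_def by auto
        qed (auto simp: h'_def)
      qed
    next
      show "h' (length (blocks k p (Suc m)) - 1) = Suc m - 1"
        unfolding e h'_def Lq_def by auto
    qed
  qed
qed

lemma fwd:
  assumes "is_delay d p q" "p \<noteq> []"
  shows "\<exists>h. delayh d p q h"
proof -
  obtain k where k: "(\<Sum>j<length p. k j) = d" "q = blocks k p (length p)"
    using assms(1) unfolding is_delay_def by blast
  have "0 < length p" using assms(2) by simp
  from fwd_gen[OF this, of k p] obtain h where
    "(\<forall>s<length q. q ! s = p!(h s)) \<and> h 0 = 0 \<and>
   (\<forall>s. Suc s < length q \<longrightarrow> h (Suc s) = h s \<or> h (Suc s) = Suc (h s)) \<and>
   h (length q - 1) = length p - 1" using k(2) by metis
  moreover have "length q = length p + d" using k blocks_len by metis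
  ultimately show ?thesis unfolding delayh_def by blast
qed

lemma bwd_gen:
  "\<forall>m h. 0 < m \<and> q \<noteq> [] \<and> (\<forall>s<length q. q!s = p!(h s)) \<and> h 0 = 0 \<and>
   (\<forall>s. Suc s < length q \<longrightarrow> h (Suc s) = h s \<or> h (Suc s) = Suc (h s)) \<and>
   h (length q - 1) = m - 1 \<longrightarrow> (\<exists>k. q = blocks k p m)"
proof (induction q rule: rev_induct)
  case Nil then show ?case by simp
next
  case (snoc x q)
  show ?case
  proof (intro allI impI)
    fix m h
    assume A: "0 < m \<and> q @ [x] \<noteq> [] \<and> (\<forall>s<length (q @ [x]). (q @ [x]) ! s = p ! h s) \<and>
         h 0 = 0 \<and> (\<forall>s. Suc s < length (q @ [x]) \<longrightarrow> h (Suc s) = h s \<or> h (Suc s) = Suc (h s)) \<and>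
         h (length (q @ [x]) - 1) = m - 1"
    show "\<exists>k. q @ [x] = blocks k p m"
    proof (cases "q = []")
      case True
      then have "m = 1" "x = p ! 0" using A by auto
      then show ?thesis using True by (intro exI[of _ "\<lambda>_. 0"]) simp
    next
      case False
      define L where "L = length q"
      have L0: "0 < L" using False L_def by simp
      have hq: "\<forall>s<length q. q!s = p!(h s)"
      proof (intro allI impI)
        fix s assume "s < length q"
        then have "s < length (q@[x])" by simp
        then have "(q@[x])!s = p!(h s)" using A by blast
        moreover have "(q@[x])!s = q!s" using \<open>s < length q\<close> by (simp add: nth_append)
        ultimately show "q!s = p!(h s)" by simp
      qed
      have hs: "\<forall>s. Suc s < length q \<longrightarrow> h (Suc s) = h s \<or> h (Suc s) = Suc (h s)" using A by auto
      have hL: "h L = m - 1" using A L_def by simp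
      have "(q@[x]) ! L = p ! (h L)" using A L_def by (metis length_append_singleton lessI)
      then have x: "x = p ! (m - 1)" using hL L_def by simp
      have As: "\<forall>s. Suc s < length (q@[x]) \<longrightarrow> h (Suc s) = h s \<or> h (Suc s) = Suc (h s)" using A by blast
      have "Suc (L-1) < length (q@[x])" using L0 L_def by simp
      then have st: "h (Suc (L-1)) = h (L - 1) \<or> h (Suc (L-1)) = Suc (h (L - 1))"
        using As by blast
      then have st: "h L = h (L - 1) \<or> h L = Suc (h (L - 1))" using L0 by simp
      show ?thesis
      proof (cases "h (L - 1) = m - 1")
        case True
        then have "h (length q - 1) = m - 1" using L_def by simp
        then obtain k where k: "q = blocks k p m" using snoc.IH A False hq hs by blast
        define k' where "k' = k(m - 1 := Suc (k (m - 1)))"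
        have u: "[0..<m] = [0..<m-1] @ [m-1]" using A by (metis Suc_diff_1 upt_Suc_append zero_le)
        have "blocks k' p (m-1) = blocks k p (m-1)" unfolding k'_def by (intro arg_cong[where f=concat] map_cong) auto
        then have "blocks k' p m = blocks k p m @ [p ! (m-1)]"
          unfolding u by (simp add: k'_def replicate_append_same[symmetric])
        then show ?thesis using k x by metis
      next
        case False
        then have F: "h (L - 1) = m - 2" "m \<ge> 2" using st hL by auto
        then have "h (length q - 1) = (m - 1) - 1" "0 < m - 1" using L_def by auto
        then obtain k where k: "q = blocks k p (m-1)" using snoc.IH A \<open>q \<noteq> []\<close> hq hs
          by blast
        define k' where "k' = k(m - 1 := 0)"
        have u: "[0..<m] = [0..<m-1] @ [m-1]" using A by (metis Suc_diff_1 upt_Suc_append zero_le)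
        have "blocks k' p (m-1) = blocks k p (m-1)" unfolding k'_def by (intro arg_cong[where f=concat] map_cong) auto
        then have "blocks k' p m = blocks k p (m-1) @ [p ! (m-1)]"
          unfolding u by (simp add: k'_def)
        then show ?thesis using k x by metis
      qed
    qed
  qed
qed

lemma bwd:
  assumes "delayh d p q h" "p \<noteq> []"
  shows "is_delay d p q"
proof -
  have "q \<noteq> []" using assms unfolding delayh_def by auto
  then obtain k where k: "q = blocks k p (length p)" using bwd_gen[of q p] assms unfolding delayh_def by blast
  have "length q = length p + d" using assms unfolding delayh_def by auto
  then have "(\<Sum>j<length p. k j) = d" using k blocks_len[of k p "length p"] by simp
  then show ?thesis unfolding is_delay_def using k by blast
qed


lemma count_steps:
  assumes "\<forall>s<N. h (Suc s) = h s \<or> h (Suc s) = Suc (h s)"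
  shows "card {t. t < N \<and> h (Suc t) = Suc (h t)} + h 0 = h N"
  using assms
proof (induction N)
  case 0 then show ?case by simp
next
  case (Suc N)
  have IH: "card {t. t < N \<and> h (Suc t) = Suc (h t)} + h 0 = h N" using Suc by auto
  show ?case
  proof (cases "h (Suc N) = Suc (h N)")
    case True
    then have "{t. t < Suc N \<and> h (Suc t) = Suc (h t)} = insert N {t. t < N \<and> h (Suc t) = Suc (h t)}"
      by (auto simp: less_Suc_eq)
    then show ?thesis using IH True by simp
  next
    case False
    then have "{t. t < Suc N \<and> h (Suc t) = Suc (h t)} = {t. t < N \<and> h (Suc t) = Suc (h t)}"
      by (auto simp: less_Suc_eq)
    moreover have "h (Suc N) = h N" using False Suc.prems by auto
    ultimately show ?thesis using IH by simp
  qed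
qed

lemma card_split: "card {t. t < N \<and> P t} + card {t. t < N \<and> \<not> P t} = N"
proof -
  have "{t. t < N \<and> P t} \<union> {t. t < N \<and> \<not> P t} = {..<N}" by auto
  moreover have "card ({t. t < N \<and> P t} \<union> {t. t < N \<and> \<not> P t}) =
     card {t. t < N \<and> P t} + card {t. t < N \<and> \<not> P t}"
    by (rule card_Un_disjoint) auto
  ultimately show ?thesis by simp
qed

lemma counts:
  assumes "delayh d p q h" "p \<noteq> []"
  shows "card {t. t < length q - 1 \<and> h (Suc t) = Suc (h t)} = path_len p"
    "card {t. t < length q - 1 \<and> h (Suc t) = h t} = d"
proof -
  have st: "\<forall>s<length q - 1. h (Suc s) = h s \<or> h (Suc s) = Suc (h s)" using assms unfolding delayh_def by auto
  have hL: "h (length q - 1) = length p - 1" "h 0 = 0" using assms unfolding delayh_def by auto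
  from count_steps[OF st] show 1: "card {t. t < length q - 1 \<and> h (Suc t) = Suc (h t)} = path_len p"
    using hL unfolding path_len_def by simp
  have "{t. t < length q - 1 \<and> h (Suc t) = h t} = {t. t < length q - 1 \<and> \<not> h (Suc t) = Suc (h t)}"
    using st by auto
  then have e: "card {t. t < length q - 1 \<and> h (Suc t) = h t} = card {t. t < length q - 1 \<and> \<not> h (Suc t) = Suc (h t)}" by simp
  have c: "path_len p + card {t. t < length q - 1 \<and> \<not> h (Suc t) = Suc (h t)} = length q - 1"
    using card_split[of "length q - 1" "\<lambda>t. h (Suc t) = Suc (h t)"] 1 by simp
  have "0 < length p" "length q = length p + d" using assms unfolding delayh_def by auto
  then show "card {t. t < length q - 1 \<and> h (Suc t) = h t} = d"
    using e c unfolding path_len_def by linarith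
qed

lemma nth_cut: "s < length q - 1 \<Longrightarrow> Suc t < length q \<Longrightarrow>
  (take t q @ drop (Suc t) q) ! s = q ! (if s < t then s else Suc s)"
  by (auto simp: nth_append)

lemma cut_delay:
  assumes "delayh d p q h" "Suc t < length q" "h (Suc t) = h t" "0 < d"
  shows "delayh (d - 1) p (take t q @ drop (Suc t) q) (\<lambda>s. h (if s < t then s else Suc s))"
proof -
  have L: "length (take t q @ drop (Suc t) q) = length q - 1" using assms(2) by auto
  show ?thesis unfolding delayh_def L
  proof (intro conjI allI impI)
    show "length q - 1 = length p + (d - 1)" using assms unfolding delayh_def by auto
  next
    fix s assume "s < length q - 1"
    then show "(take t q @ drop (Suc t) q) ! s = p ! h (if s < t then s else Suc s)"
      using nth_cut[OF _ assms(2)] assms(1) unfolding delayh_def by auto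
  next
    show "h (if 0 < t then 0 else Suc 0) = 0" using assms unfolding delayh_def by auto
  next
    fix s assume s: "Suc s < length q - 1"
    have st: "\<forall>s. Suc s < length q \<longrightarrow> h (Suc s) = h s \<or> h (Suc s) = Suc (h s)"
      using assms unfolding delayh_def by auto
    show "h (if Suc s < t then Suc s else Suc (Suc s)) = h (if s < t then s else Suc s) \<or>
          h (if Suc s < t then Suc s else Suc (Suc s)) = Suc (h (if s < t then s else Suc s))"
    proof -
      consider "Suc s < t" | "Suc s = t" | "Suc s > t" by arith
      then show ?thesis
      proof cases
        case 1 then show ?thesis using st s by auto
      next
        case 2 then show ?thesis using st[rule_format, of s] s assms(3) by auto
      next
        case 3 then show ?thesis using st s by auto
      qed
    qed
  next
    have "Suc (length q - 1 - 1) = length q - 1" "\<not> length q - 1 - 1 < t" using assms(2) by arith+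
    then show "h (if length q - 1 - 1 < t then length q - 1 - 1 else Suc (length q - 1 - 1)) = length p - 1"
      using assms unfolding delayh_def by auto
  qed
qed

lemma pos_cut:
  assumes "Suc t < length q"
  shows "pos (take t q @ drop (Suc t) q) s = pos q (if s < t then s else Suc s)"
proof -
  have L: "length (take t q @ drop (Suc t) q) = length q - 1" using assms by auto
  show ?thesis
  proof (cases "s \<le> length q - 2")
    case True
    then show ?thesis unfolding pos_def L using nth_cut[OF _ assms, of s] assms
      by (auto simp: min_def)
  next
    case False
    define k where "k = length q - 1 - 1"
    have k: "Suc k = length q - 1" "k < length q - 1" "\<not> k < t" "min s k = k" "\<not> s < t"
       "min (Suc s) (length q - 1) = length q - 1"
      using assms False unfolding k_def by arith+
    have "pos (take t q @ drop (Suc t) q) s = (take t q @ drop (Suc t) q) ! k"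
      unfolding pos_def L k_def[symmetric] using k by simp
    also have "\<dots> = q ! Suc k" using nth_cut[OF k(2) assms] k by simp
    also have "\<dots> = pos q (if s < t then s else Suc s)" unfolding pos_def using k by simp
    finally show ?thesis .
  qed
qed

lemma pos_uncut:
  assumes "length q \<le> Suc t"
  shows "pos q s = pos q (if s < t then s else Suc s)"
proof (cases "s < t")
  case False
  then have "min s (length q - 1) = length q - 1" "min (Suc s) (length q - 1) = length q - 1" using assms by auto
  then show ?thesis using False unfolding pos_def by simp
qed (simp)

lemma pos_Suc_shift:
  assumes "\<forall>s. pos q' s = pos q (if s < t then s else Suc s)" "pos q (Suc t) = pos q t"
  shows "pos q' (Suc s) = pos q (Suc (if s < t then s else Suc s))"
proof -
  consider "Suc s < t" | "Suc s = t" | "Suc s > t" by arith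
  then show ?thesis
  proof cases
    case 1 then show ?thesis using assms(1)[rule_format, of "Suc s"] by auto
  next
    case 2 then show ?thesis using assms(1)[rule_format, of "Suc s"] assms(2) by auto
  next
    case 3 then show ?thesis using assms(1)[rule_format, of "Suc s"] by auto
  qed
qed

lemma nc_transfer:
  assumes "non_colliding a b"
    and "\<forall>s. pos a' s = pos a (g s)" "\<forall>s. pos a' (Suc s) = pos a (Suc (g s))"
    and "\<forall>s. pos b' s = pos b (g s)" "\<forall>s. pos b' (Suc s) = pos b (Suc (g s))"
    and "\<forall>s. Suc s < length a' \<longrightarrow> Suc (g s) < length a"
    and "\<forall>s. Suc s < length b' \<longrightarrow> Suc (g s) < length b"
  shows "non_colliding a' b'"
  unfolding non_colliding_def
proof (intro allI impI)
  fix s assume "Suc s < max (length a') (length b')"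
  then have "Suc (g s) < max (length a) (length b)" using assms(6,7) by (auto simp: less_max_iff_disj)
  then have "pos a (g s) \<noteq> pos b (g s) \<and> (pos a (g s), pos a (Suc (g s))) \<noteq> (pos b (Suc (g s)), pos b (g s))"
    using assms(1) unfolding non_colliding_def by blast
  then show "pos a' s \<noteq> pos b' s \<and> (pos a' s, pos a' (Suc s)) \<noteq> (pos b' (Suc s), pos b' s)"
    using assms(2-5) by metis
qed


lemma reduce:
  assumes ne: "\<forall>i<n. P i \<noteq> []"
    and dl: "\<forall>i<n. is_delay (d i) (P i) (Q i)"
    and nc: "plan_non_colliding n Q"
    and big: "(n - 1) * soc n P < (\<Sum>i<n. d i)"
  shows "\<exists>Q' d'. (\<forall>i<n. is_delay (d' i) (P i) (Q' i)) \<and> (\<Sum>i<n. d' i) < (\<Sum>i<n. d i)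
     \<and> plan_non_colliding n Q'"
proof -
  have "\<forall>i. \<exists>h. i < n \<longrightarrow> delayh (d i) (P i) (Q i) h" using fwd ne dl by blast
  then obtain H where H: "\<And>i. i < n \<Longrightarrow> delayh (d i) (P i) (Q i) (H i)" by metis
  define Orig where "Orig i = {t. t < length (Q i) - 1 \<and> H i (Suc t) = Suc (H i t)}" for i
  define Dl where "Dl i = {t. t < length (Q i) - 1 \<and> H i (Suc t) = H i t}" for i
  have cO: "card (Orig i) = path_len (P i)" if "i < n" for i
    using counts(1)[OF H[OF that]] ne that unfolding Orig_def by auto
  have cD: "card (Dl i) = d i" if "i < n" for i
    using counts(2)[OF H[OF that]] ne that unfolding Dl_def by auto
  have fO: "finite (Orig i)" for i unfolding Orig_def by auto
  have fD: "finite (Dl i)" for i unfolding Dl_def by auto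
  have steps: "\<And>i s. i < n \<Longrightarrow> Suc s < length (Q i) \<Longrightarrow> H i (Suc s) = H i s \<or> H i (Suc s) = Suc (H i s)"
    using H unfolding delayh_def by blast
  show ?thesis
  proof (cases "\<exists>i<n. \<exists>t\<in>Dl i. \<forall>j<n. t \<notin> Orig j")
    case False
    define T where "T = (\<Union>j<n. Orig j)"
    have fT: "finite T" unfolding T_def using fO by auto
    have cT: "card T \<le> soc n P"
    proof -
      have "card T \<le> (\<Sum>j<n. card (Orig j))" unfolding T_def by (rule card_UN_le) simp
      also have "\<dots> = soc n P" unfolding soc_def using cO by simp
      finally show ?thesis .
    qed
    have each: "d i + path_len (P i) \<le> soc n P" if i: "i < n" for i
    proof -
      have sub: "Dl i \<union> Orig i \<subseteq> T" using False i unfolding T_def by blast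
      have disj: "Dl i \<inter> Orig i = {}" unfolding Dl_def Orig_def by auto
      have "card (Dl i \<union> Orig i) = d i + path_len (P i)"
        using card_Un_disjoint[OF fD fO disj] cD[OF i] cO[OF i] by simp
      moreover have "card (Dl i \<union> Orig i) \<le> card T" using card_mono[OF fT sub] .
      ultimately show ?thesis using cT by simp
    qed
    have "(\<Sum>i<n. d i + path_len (P i)) \<le> (\<Sum>i<n. soc n P)" using each by (intro sum_mono) auto
    then have "(\<Sum>i<n. d i) + soc n P \<le> n * soc n P" unfolding soc_def by (simp add: sum.distrib)
    then have "(\<Sum>i<n. d i) \<le> (n - 1) * soc n P" by (simp add: diff_mult_distrib)
    then show ?thesis using big by simp
  next
    case True
    then obtain i t where i: "i < n" and tD: "t \<in> Dl i" and notO: "\<forall>j<n. t \<notin> Orig j" by blast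
    define g where "g s = (if s < t then s else Suc s)" for s
    define Q' where "Q' j = (if Suc t < length (Q j) then take t (Q j) @ drop (Suc t) (Q j) else Q j)" for j
    define d' where "d' j = (if Suc t < length (Q j) then d j - 1 else d j)" for j
    have cutD: "t \<in> Dl j" if "j < n" "Suc t < length (Q j)" for j
      using notO steps[OF that] that unfolding Dl_def Orig_def by auto
    have dpos: "0 < d j" if "j < n" "Suc t < length (Q j)" for j
    proof -
      have "Dl j \<noteq> {}" using cutD[OF that] by blast
      then have "0 < card (Dl j)" using fD by (simp add: card_gt_0_iff)
      then show ?thesis using cD that by simp
    qed
    have newdl: "is_delay (d' j) (P j) (Q' j)" if j: "j < n" for j
    proof (cases "Suc t < length (Q j)")
      case True
      have "H j (Suc t) = H j t" using cutD[OF j True] unfolding Dl_def by simp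
      from cut_delay[OF H[OF j] True this dpos[OF j True]]
      have "delayh (d j - 1) (P j) (Q' j) (\<lambda>s. H j (if s < t then s else Suc s))"
        using True unfolding Q'_def by simp
      from bwd[OF this] ne j True show ?thesis unfolding d'_def by auto
    next
      case False
      then show ?thesis using dl j unfolding d'_def Q'_def by simp
    qed
    have lt: "(\<Sum>j<n. d' j) < (\<Sum>j<n. d j)"
    proof (rule sum_strict_mono_ex1)
      show "\<forall>x\<in>{..<n}. d' x \<le> d x" unfolding d'_def by auto
      have "Suc t < length (Q i)" using tD unfolding Dl_def by auto
      then show "\<exists>a\<in>{..<n}. d' a < d a" using i dpos unfolding d'_def by force
    qed simp
    have P1: "\<forall>s. pos (Q' j) s = pos (Q j) (g s)" for j
    proof
      fix s show "pos (Q' j) s = pos (Q j) (g s)"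
      proof (cases "Suc t < length (Q j)")
        case True then show ?thesis unfolding Q'_def g_def using pos_cut[OF True, of s] by simp
      next
        case False then show ?thesis unfolding Q'_def g_def using pos_uncut[of "Q j" t s] by simp
      qed
    qed
    have P0: "pos (Q j) (Suc t) = pos (Q j) t" if j: "j < n" for j
    proof (cases "Suc t < length (Q j)")
      case True
      have "H j (Suc t) = H j t" using cutD[OF j True] unfolding Dl_def by simp
      then show ?thesis using H[OF j] True unfolding delayh_def pos_def by auto
    next
      case False
      then have "min (Suc t) (length (Q j) - 1) = length (Q j) - 1" "min t (length (Q j) - 1) = length (Q j) - 1"
        by auto
      then show ?thesis unfolding pos_def by simp
    qed
    have P2: "\<forall>s. pos (Q' j) (Suc s) = pos (Q j) (Suc (g s))" if "j < n" for j
      using pos_Suc_shift[OF P1[unfolded g_def] P0[OF that]] unfolding g_def by blast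
    have Lc: "\<forall>s. Suc s < length (Q' j) \<longrightarrow> Suc (g s) < length (Q j)" for j
      unfolding Q'_def g_def by auto
    have "plan_non_colliding n Q'"
      unfolding plan_non_colliding_def
    proof (intro allI impI)
      fix a b assume ab: "a < n" "b < n" "a \<noteq> b"
      show "non_colliding (Q' a) (Q' b)"
        by (rule nc_transfer[OF _ P1 P2[OF ab(1)] P1 P2[OF ab(2)] Lc Lc])
          (use nc ab in \<open>auto simp: plan_non_colliding_def\<close>)
    qed
    then show ?thesis using newdl lt by blast
  qed
qed

theorem lemma1:
  fixes V :: "'v set" and E :: "('v \<times> 'v) set" and n :: nat
    and P :: "nat \<Rightarrow> 'v list" and D :: nat
  assumes "E \<subseteq> V \<times> V"
    and "\<forall>v\<in>V. (v, v) \<in> E"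
    and "\<forall>i<n. is_path V E (P i)"
    and "acid_solvable n P D"
  shows "acid_solvable n P ((n - 1) * soc n P)"
proof -
  have ne: "\<forall>i<n. P i \<noteq> []" using assms(3) unfolding is_path_def by auto
  define Sol where "Sol N \<longleftrightarrow> (\<exists>(Q :: nat \<Rightarrow> 'v list) d. (\<forall>i<n. is_delay (d i) (P i) (Q i)) \<and>
      (\<Sum>i<n. d i) = N \<and> plan_non_colliding n Q)" for N
  have ex: "\<exists>N. Sol N" using assms(4) unfolding acid_solvable_def Sol_def by blast
  define N0 where "N0 = (LEAST N. Sol N)"
  have S0: "Sol N0" unfolding N0_def using ex by (metis LeastI)
  then obtain Q d where Q: "\<forall>i<n. is_delay (d i) (P i) (Q i)" "(\<Sum>i<n. d i) = N0" "plan_non_colliding n Q"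
    unfolding Sol_def by blast
  have "N0 \<le> (n - 1) * soc n P"
  proof (rule ccontr)
    assume "\<not> N0 \<le> (n - 1) * soc n P"
    then have "(n - 1) * soc n P < (\<Sum>i<n. d i)" using Q by simp
    from reduce[OF ne Q(1) Q(3) this] obtain Q' d' where
      R: "\<forall>i<n. is_delay (d' i) (P i) (Q' i)" "(\<Sum>i<n. d' i) < N0" "plan_non_colliding n Q'"
      using Q(2) by metis
    then have "Sol (\<Sum>i<n. d' i)" unfolding Sol_def by blast
    then have "N0 \<le> (\<Sum>i<n. d' i)" unfolding N0_def by (rule Least_le)
    then show False using R(2) by simp
  qed
  then show ?thesis unfolding acid_solvable_def using Q by auto
qed

end
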